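(* For every node $v\in\mathcal V$ and observed histories $(y,\tilde M_y)$, $(z,\tilde M_z)$ with $\Pr(\mathbf M[y]=\tilde M_y)>0$, $\Pr(\mathbf M[z]=\tilde M_z)>0$ and $(y,\tilde M_y)\subset(z,\tilde M_z)$, we have $\Delta(v\mid y,\tilde M_y)\ge\Delta(v\mid z,\tilde M_z)$.
   Context: Model (multi-seeding with intermediary constraints). $\mathcal G=(\mathcal V,\mathcal E)$ is a finite directed graph; for an arc $e=(u,v)$, $u$ is called the head node of $e$ and influence can pass from $u$ to $v$. Each arc $e$ has an influence probability $\bar w(e)\in[0,1]$ and each node $v$ has a reward $\mathbf r(v)\ge 0$. A seeding sequence is a finite sequence $y=(v_1,\dots,v_t)$ of nodes (repetitions allowed), $|y|=t$; $a@b$ denotes concatenation; $y\subset z$ for sequences means $y$ is a prefix of $z$. A realization matrix is an array $M=(M(e,j))_{e\in\mathcal E,\,j\ge 1}$ with entries in $\{0,1\}$; $M(e,j)$ is the realization of arc $e$ the $j$-th time $e$ is observed. The random realization matrix $\mathbf M$ has independent entries $\mathbf M(e,j)\sim\mathrm{Bernoulli}(\bar w(e))$. Given $y=(v_1,\dots,v_t)$ and $M$, rounds $\tau=1,\dots,t$ are run on graphs $\mathcal G_\tau=(\mathcal V,\mathcal E_\tau)$, $\mathcal E_1=\mathcal E$: in round $\tau$ the seed $v_\tau$ is activated and an independent-cascade diffusion runs on $\mathcal G_\tau$: each node activated in round $\tau$ observes each of its outgoing arcs $e\in\mathcal E_\tau$ once in that round; if $e$ was observed $k$ times before, its realization is $M(e,k+1)$;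 if it equals $1$, the other endpoint of $e$ becomes activated in round $\tau$. After round $\tau$, for every node activated in round $\tau$ other than $v_\tau$ (an intermediary), all arcs pointing into that node are removed, giving $\mathcal E_{\tau+1}$. The partial matrix $M[y]$ agrees with $M$ on the entries observed during this process and equals "?" elsewhere. The objective $f(y,M)=\sum_{v\in S}\mathbf r(v)$, where $S$ is the set of nodes $v$ with $v\in y$ or with some arc $(u,v)$ having an observed entry equal to $1$; $f(y,M)$ depends only on $(y,M[y])$ and is also written $f(y,\tilde M_y)$. An observed history is a pair $(y,\tilde M_y)$ where $\tilde M_y$ is a possible value of $\mathbf M[y]$. Sub-history: $(y,\tilde M_y)\subset(z,\tilde M_z)$ means $y\subset z$ and there exists a realization matrix $M$ with $M[y]=\tilde M_y$ and $M[z]=\tilde M_z$. The expected marginal gain is $\Delta(v\mid y,\tilde M_y)=\mathbb E[f(y@(v),\mathbf M)\mid \mathbf M[y]=\tilde M_y]-f(y,\tilde M_y)$. *)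

theory Defs
  imports "HOL-Probability.Probability" "HOL-Library.Sublist"
begin

text \<open>Nodes are the elements of a finite type 'v (so the node set V is UNIV). A realization matrix is a function
M :: (arc \<times> nat) \<Rightarrow> bool; entry (e,j) for j \<ge> 1 is the j-th realization of e
(entry index 0 is never used). A partial matrix uses None for "?".\<close>

type_synonym 'v realization = "('v \<times> 'v) \<times> nat \<Rightarrow> bool"
type_synonym 'v partial_realization = "('v \<times> 'v) \<times> nat \<Rightarrow> bool option"

text \<open>State between rounds: current arc set E_tau and the number of times each arc
has been observed so far.\<close>

definition live_arcs :: "('v \<times> 'v) set \<Rightarrow> ('v \<times> 'v \<Rightarrow> nat) \<Rightarrow> 'v realization \<Rightarrow> ('v \<times> 'v) set" where
  "live_arcs Ec cnt M = {e \<in> Ec. M (e, Suc (cnt e))}"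

text \<open>Nodes activated in a round seeded at s: reachable from s via arcs whose next
realization is 1 (each activated node observes each outgoing arc once).\<close>
definition round_activated :: "('v \<times> 'v) set \<Rightarrow> ('v \<times> 'v \<Rightarrow> nat) \<Rightarrow> 'v realization \<Rightarrow> 'v \<Rightarrow> 'v set" where
  "round_activated Ec cnt M s = {x. (s, x) \<in> (live_arcs Ec cnt M)\<^sup>*}"

definition round_step :: "'v realization \<Rightarrow> ('v \<times> 'v) set \<times> ('v \<times> 'v \<Rightarrow> nat) \<Rightarrow> 'v
    \<Rightarrow> ('v \<times> 'v) set \<times> ('v \<times> 'v \<Rightarrow> nat)" where
  "round_step M st s =
     (let Ec = fst st; cnt = snd st; A = round_activated Ec cnt M s in
       ({e \<in> Ec. snd e \<notin> A - {s}},
        (\<lambda>e. if e \<in> Ec \<and> fst e \<in> A then Suc (cnt e) else cnt e)))"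

definition run_rounds :: "('v \<times> 'v) set \<Rightarrow> 'v list \<Rightarrow> 'v realization
    \<Rightarrow> ('v \<times> 'v) set \<times> ('v \<times> 'v \<Rightarrow> nat)" where
  "run_rounds E y M = fold (\<lambda>s st. round_step M st s) y (E, (\<lambda>_. 0))"

definition partial_matrix :: "('v \<times> 'v) set \<Rightarrow> 'v list \<Rightarrow> 'v realization \<Rightarrow> 'v partial_realization" where
  "partial_matrix E y M =
     (\<lambda>(e, j). if 1 \<le> j \<and> j \<le> snd (run_rounds E y M) e then Some (M (e, j)) else None)"

definition f_hist :: "('v::finite \<Rightarrow> real) \<Rightarrow> 'v list \<Rightarrow> 'v partial_realization \<Rightarrow> real" where
  "f_hist r y Mt = sum r (set y \<union> {x. \<exists>u j. Mt ((u, x), j) = Some True})"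

definition f_obj :: "('v \<times> 'v) set \<Rightarrow> ('v::finite \<Rightarrow> real) \<Rightarrow> 'v list \<Rightarrow> 'v realization \<Rightarrow> real" where
  "f_obj E r y M = f_hist r y (partial_matrix E y M)"

definition real_measure :: "('v \<times> 'v) set \<Rightarrow> ('v \<times> 'v \<Rightarrow> real) \<Rightarrow> 'v realization measure" where
  "real_measure E w =
     (\<Pi>\<^sub>M ej\<in>UNIV. measure_pmf (bernoulli_pmf (if fst ej \<in> E then w (fst ej) else 0)))"

definition hist_event :: "('v \<times> 'v) set \<Rightarrow> ('v \<times> 'v \<Rightarrow> real) \<Rightarrow> 'v list \<Rightarrow> 'v partial_realization
    \<Rightarrow> 'v realization set" where
  "hist_event E w y Mt = {M \<in> space (real_measure E w). partial_matrix E y M = Mt}"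

definition hist_prob :: "('v \<times> 'v) set \<Rightarrow> ('v \<times> 'v \<Rightarrow> real) \<Rightarrow> 'v list \<Rightarrow> 'v partial_realization \<Rightarrow> real" where
  "hist_prob E w y Mt = measure (real_measure E w) (hist_event E w y Mt)"

definition cond_expect :: "'a measure \<Rightarrow> ('a \<Rightarrow> real) \<Rightarrow> 'a set \<Rightarrow> real" where
  "cond_expect P X A = (\<integral>x. X x * indicator A x \<partial>P) / measure P A"

definition marginal_gain :: "('v \<times> 'v) set \<Rightarrow> ('v \<times> 'v \<Rightarrow> real) \<Rightarrow> ('v::finite \<Rightarrow> real)
    \<Rightarrow> 'v \<Rightarrow> 'v list \<Rightarrow> 'v partial_realization \<Rightarrow> real" where
  "marginal_gain E w r v y Mt =
     cond_expect (real_measure E w) (\<lambda>M. f_obj E r (y @ [v]) M) (hist_event E w y Mt)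
     - f_hist r y Mt"

definition sub_history :: "('v \<times> 'v) set \<Rightarrow> 'v list \<times> 'v partial_realization
    \<Rightarrow> 'v list \<times> 'v partial_realization \<Rightarrow> bool" where
  "sub_history E h1 h2 \<longleftrightarrow> prefix (fst h1) (fst h2) \<and>
     (\<exists>M. partial_matrix E (fst h1) M = snd h1 \<and> partial_matrix E (fst h2) M = snd h2)"

end

theory Submission
  imports Defs
begin


lemma round_step_simp:
  "round_step M (Ec, c) s =
    ({e\<in>Ec. snd e \<notin> round_activated Ec c M s - {s}},
     (\<lambda>e. if e \<in> Ec \<and> fst e \<in> round_activated Ec c M s then Suc (c e) else c e))"
  by (simp add: round_step_def Let_def)

lemma run_snoc: "run_rounds E (ys @ [s]) M = round_step M (run_rounds E ys M) s"
  by (simp add: run_rounds_def)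

lemma run_append:
  "run_rounds E (ys @ ts) M = fold (\<lambda>s st. round_step M st s) ts (run_rounds E ys M)"
  by (simp add: run_rounds_def)

lemma round_step_mono:
  "fst (round_step M st s) \<subseteq> fst st \<and> (\<forall>e. snd st e \<le> snd (round_step M st s) e)"
  by (cases st) (auto simp: round_step_simp)

lemma fold_mono:
  "fst (fold (\<lambda>s st. round_step M st s) ts st) \<subseteq> fst st \<and>
   (\<forall>e. snd st e \<le> snd (fold (\<lambda>s st. round_step M st s) ts st) e)"
proof (induction ts arbitrary: st)
  case Nil then show ?case by simp
next
  case (Cons a ts)
  have eq: "fold (\<lambda>s st. round_step M st s) (a # ts) st = fold (\<lambda>s st. round_step M st s) ts (round_step M st a)" by simp
  show ?case unfolding eq using Cons.IH[of "round_step M st a"] round_step_mono[of M st a]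
    by (meson order_trans subset_trans)
qed

lemma RA_cong:
  assumes "\<forall>e\<in>Ec. fst e \<in> round_activated Ec c M s \<longrightarrow> M' (e, Suc (c e)) = M (e, Suc (c e))"
  shows "round_activated Ec c M' s = round_activated Ec c M s"
proof -
  have 1: "(s, x) \<in> (live_arcs Ec c M')\<^sup>*" if "(s, x) \<in> (live_arcs Ec c M)\<^sup>*" for x
    using that
  proof (induction rule: rtrancl_induct)
    case base then show ?case by simp
  next
    case (step a b)
    then have "a \<in> round_activated Ec c M s" by (simp add: round_activated_def)
    with step assms have "(a, b) \<in> live_arcs Ec c M'" by (auto simp: live_arcs_def)
    with step show ?case by (meson rtrancl_into_rtrancl)
  qed
  have 2: "(s, x) \<in> (live_arcs Ec c M)\<^sup>*" if "(s, x) \<in> (live_arcs Ec c M')\<^sup>*" for x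
    using that
  proof (induction rule: rtrancl_induct)
    case base then show ?case by simp
  next
    case (step a b)
    then have "a \<in> round_activated Ec c M s" by (simp add: round_activated_def)
    with step assms have "(a, b) \<in> live_arcs Ec c M" by (auto simp: live_arcs_def)
    with step show ?case by (meson rtrancl_into_rtrancl)
  qed
  show ?thesis using 1 2 by (auto simp: round_activated_def)
qed

lemma det:
  "(\<forall>e j. 1 \<le> j \<and> j \<le> snd (run_rounds E y M) e \<longrightarrow> M' (e, j) = M (e, j)) \<Longrightarrow>
   run_rounds E y M' = run_rounds E y M"
proof (induction y rule: rev_induct)
  case Nil then show ?case by (simp add: run_rounds_def)
next
  case (snoc s ys)
  obtain Ec c where st: "run_rounds E ys M = (Ec, c)" by fastforce
  let ?A = "round_activated Ec c M s"
  have new: "snd (run_rounds E (ys @ [s]) M) e = (if e \<in> Ec \<and> fst e \<in> ?A then Suc (c e) else c e)" for e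
    by (simp only: run_snoc st round_step_simp snd_conv)
  have "\<forall>e j. 1 \<le> j \<and> j \<le> snd (run_rounds E ys M) e \<longrightarrow> M' (e, j) = M (e, j)"
  proof (intro allI impI)
    fix e j assume a: "1 \<le> j \<and> j \<le> snd (run_rounds E ys M) e"
    have "c e \<le> snd (run_rounds E (ys @ [s]) M) e" unfolding new by simp
    with a st have "1 \<le> j \<and> j \<le> snd (run_rounds E (ys @ [s]) M) e" by simp
    with snoc.prems show "M' (e, j) = M (e, j)" by blast
  qed
  then have "run_rounds E ys M' = run_rounds E ys M" by (rule snoc.IH)
  with st have st': "run_rounds E ys M' = (Ec, c)" by simp
  have "\<forall>e\<in>Ec. fst e \<in> ?A \<longrightarrow> M' (e, Suc (c e)) = M (e, Suc (c e))"
  proof (intro ballI impI)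
    fix e assume "e \<in> Ec" "fst e \<in> ?A"
    then have "1 \<le> Suc (c e) \<and> Suc (c e) \<le> snd (run_rounds E (ys @ [s]) M) e" unfolding new by simp
    with snoc.prems show "M' (e, Suc (c e)) = M (e, Suc (c e))" by blast
  qed
  then have RA: "round_activated Ec c M' s = ?A" by (rule RA_cong)
  show ?case by (simp only: run_snoc st st' round_step_simp RA)
qed

lemma partial_eq_iff:
  "partial_matrix E y M' = partial_matrix E y M \<longleftrightarrow>
   (\<forall>e j. 1 \<le> j \<and> j \<le> snd (run_rounds E y M) e \<longrightarrow> M' (e, j) = M (e, j))"
proof
  assume h: "partial_matrix E y M' = partial_matrix E y M"
  show "\<forall>e j. 1 \<le> j \<and> j \<le> snd (run_rounds E y M) e \<longrightarrow> M' (e, j) = M (e, j)"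
  proof (intro allI impI)
    fix e j assume j: "1 \<le> j \<and> j \<le> snd (run_rounds E y M) e"
    have "partial_matrix E y M' (e, j) = partial_matrix E y M (e, j)" using h by simp
    with j show "M' (e, j) = M (e, j)"
      by (auto simp: partial_matrix_def split: if_splits)
  qed
next
  assume h: "\<forall>e j. 1 \<le> j \<and> j \<le> snd (run_rounds E y M) e \<longrightarrow> M' (e, j) = M (e, j)"
  then have "run_rounds E y M' = run_rounds E y M" by (rule det)
  with h show "partial_matrix E y M' = partial_matrix E y M"
    by (auto simp: partial_matrix_def fun_eq_iff)
qed

definition hits :: "'v partial_realization \<Rightarrow> 'v set" where
  "hits P = {x. \<exists>u j. P ((u, x), j) = Some True}"

lemma hits_partial:
  "run_rounds E y M = (Ec, c) \<Longrightarrow>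
   hits (partial_matrix E y M) = {x. \<exists>u j. 1 \<le> j \<and> j \<le> c (u, x) \<and> M ((u, x), j)}"
  by (auto simp: hits_def partial_matrix_def split: if_splits)

lemma S_snoc:
  assumes st: "run_rounds E y M = (Ec, c)"
  shows "set (y @ [v]) \<union> hits (partial_matrix E (y @ [v]) M) =
         (set y \<union> hits (partial_matrix E y M)) \<union> round_activated Ec c M v"
    (is "?L = ?S \<union> ?A")
proof -
  let ?c' = "\<lambda>e. if e \<in> Ec \<and> fst e \<in> ?A then Suc (c e) else c e"
  have st': "run_rounds E (y @ [v]) M = ({e\<in>Ec. snd e \<notin> ?A - {v}}, ?c')"
    by (simp add: run_snoc st round_step_simp)
  have H': "hits (partial_matrix E (y @ [v]) M) = {x. \<exists>u j. 1 \<le> j \<and> j \<le> ?c' (u, x) \<and> M ((u, x), j)}"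
    by (rule hits_partial[OF st'])
  have H: "hits (partial_matrix E y M) = {x. \<exists>u j. 1 \<le> j \<and> j \<le> c (u, x) \<and> M ((u, x), j)}"
    by (rule hits_partial[OF st])
  have vA: "v \<in> ?A" by (simp add: round_activated_def)
  show ?thesis
  proof (rule set_eqI, rule iffI)
    fix x assume "x \<in> ?L"
    then consider "x \<in> set y" | "x = v" | u j where "1 \<le> j" "j \<le> ?c' (u, x)" "M ((u, x), j)"
      using H' by auto
    then show "x \<in> ?S \<union> ?A"
    proof cases
      case 3
      show ?thesis
      proof (cases "j \<le> c (u, x)")
        case True with 3 H show ?thesis by auto
      next
        case False
        with 3 have "(u, x) \<in> Ec" "u \<in> ?A" "j = Suc (c (u, x))" by (auto split: if_splits)
        with 3 have "(u, x) \<in> live_arcs Ec c M" by (simp add: live_arcs_def)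
        with \<open>u \<in> ?A\<close> have "x \<in> ?A" by (auto simp: round_activated_def intro: rtrancl_into_rtrancl)
        then show ?thesis by simp
      qed
    qed (use vA in auto)
  next
    fix x assume x: "x \<in> ?S \<union> ?A"
    show "x \<in> ?L"
    proof (cases "x \<in> ?S")
      case True
      then show ?thesis
      proof
        assume "x \<in> set y" then show ?thesis by simp
      next
        assume "x \<in> hits (partial_matrix E y M)"
        then obtain u j where "1 \<le> j" "j \<le> c (u, x)" "M ((u, x), j)" using H by auto
        then have "j \<le> ?c' (u, x)" by auto
        with \<open>1 \<le> j\<close> \<open>M ((u, x), j)\<close> H' show ?thesis by blast
      qed
    next
      case False
      with x have xA: "x \<in> ?A" by simp
      show ?thesis
      proof (cases "x = v")
        case True then show ?thesis by simp
      next
        case False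
        from xA have "(v, x) \<in> (live_arcs Ec c M)\<^sup>*" by (simp add: round_activated_def)
        with False obtain u where u: "(v, u) \<in> (live_arcs Ec c M)\<^sup>*" "(u, x) \<in> live_arcs Ec c M"
          by (metis rtranclE)
        then have "u \<in> ?A" "(u, x) \<in> Ec" "M ((u, x), Suc (c (u, x)))"
          by (auto simp: round_activated_def live_arcs_def)
        then have "1 \<le> Suc (c (u, x)) \<and> Suc (c (u, x)) \<le> ?c' (u, x) \<and> M ((u, x), Suc (c (u, x)))"
          by simp
        with H' show ?thesis by blast
      qed
    qed
  qed
qed

lemma f_obj_snoc:
  fixes r :: "'v::finite \<Rightarrow> real"
  assumes st: "run_rounds E y M = (Ec, c)"
  shows "f_obj E r (y @ [v]) M = f_hist r y (partial_matrix E y M)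
     + sum r (round_activated Ec c M v - (set y \<union> hits (partial_matrix E y M)))"
proof -
  let ?S = "set y \<union> hits (partial_matrix E y M)"
  have "f_obj E r (y @ [v]) M = sum r (?S \<union> round_activated Ec c M v)"
    using S_snoc[OF st, of v] by (simp add: f_obj_def f_hist_def hits_def)
  also have "?S \<union> round_activated Ec c M v = ?S \<union> (round_activated Ec c M v - ?S)" by blast
  also have "sum r \<dots> = sum r ?S + sum r (round_activated Ec c M v - ?S)"
    by (rule sum.union_disjoint) auto
  finally show ?thesis by (simp add: f_hist_def hits_def)
qed



definition pc :: "('v \<times> 'v) set \<Rightarrow> ('v \<times> 'v \<Rightarrow> real) \<Rightarrow> ('v \<times> 'v) \<times> nat \<Rightarrow> bool measure" where
  "pc E w ej = measure_pmf (bernoulli_pmf (if fst ej \<in> E then w (fst ej) else 0))"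

lemma rm_eq: "real_measure E w = PiM UNIV (pc E w)"
  unfolding real_measure_def pc_def[abs_def] by (rule refl)

lemma space_pc[simp]: "space (pc E w i) = UNIV"
  by (simp add: pc_def)

lemma space_rm[simp]: "space (real_measure E w) = UNIV"
  by (simp add: rm_eq space_PiM)

lemma prob_pc: "prob_space (pc E w i)"
  by (simp add: pc_def prob_space_measure_pmf)

lemma prob_rm: "prob_space (real_measure E w)"
  unfolding rm_eq by (rule prob_space_PiM) (rule prob_pc)

lemma sets_fin:
  assumes J: "finite J" and A: "A \<subseteq> space (PiM J (pc E w))"
  shows "A \<in> sets (PiM J (pc E w))"
proof -
  have sp: "space (PiM J (pc E w)) = PiE J (\<lambda>_. UNIV)" by (simp add: space_PiM)
  have fA: "finite A" by (rule finite_subset[OF A]) (simp add: sp J finite_PiE)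
  have "A = (\<Union>f\<in>A. PiE J (\<lambda>i. {f i}))"
  proof -
    have "PiE J (\<lambda>i. {f i}) = {f}" if "f \<in> A" for f
      using that A sp by (intro PiE_singleton) (auto simp: PiE_def)
    then show ?thesis by auto
  qed
  also have "\<dots> \<in> sets (PiM J (pc E w))"
    using fA J by (intro sets.finite_UN) (auto intro!: sets_PiM_I_finite simp: pc_def)
  finally show ?thesis .
qed

lemma meas_fin_g:
  assumes "finite J"
  shows "g \<in> borel_measurable (PiM J (pc E w))"
proof (rule measurableI)
  fix A
  show "g -` A \<inter> space (PiM J (pc E w)) \<in> sets (PiM J (pc E w))"
    by (rule sets_fin[OF assms]) blast
qed simp

lemma meas_fin:
  assumes "finite J"
  shows "(\<lambda>\<omega>. g (restrict \<omega> J)) \<in> borel_measurable (real_measure E w)"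
proof -
  have "(\<lambda>f. restrict f J) \<in> measurable (real_measure E w) (PiM J (pc E w))"
    unfolding rm_eq by (rule measurable_restrict_subset) simp
  from measurable_compose[OF this meas_fin_g[OF assms]] show ?thesis .
qed

lemma integrable_fin:
  assumes "finite J" "\<And>x. \<bar>g x\<bar> \<le> B"
  shows "integrable (real_measure E w) (\<lambda>\<omega>. g (restrict \<omega> J) :: real)"
proof -
  interpret prob_space "real_measure E w" by (rule prob_rm)
  show ?thesis
    by (rule integrable_const_bound[where B=B]) (use assms meas_fin in auto)
qed

lemma indep_coords:
  "prob_space.indep_vars (real_measure E w) (pc E w) (\<lambda>i \<omega>. \<omega> i) UNIV"
proof -
  interpret prob_space "real_measure E w" by (rule prob_rm)
  have rv: "random_variable (pc E w i) (\<lambda>\<omega>. \<omega> i)" for i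
    unfolding rm_eq by (rule measurable_component_singleton) simp
  have "distr (real_measure E w) (pc E w i) (\<lambda>\<omega>. \<omega> i) = pc E w i" for i
    unfolding rm_eq by (rule distr_PiM_component) (auto intro: prob_pc)
  then have "(\<Pi>\<^sub>M i\<in>UNIV. distr (real_measure E w) (pc E w i) (\<lambda>\<omega>. \<omega> i)) = real_measure E w"
    by (simp add: rm_eq)
  moreover have "distr (real_measure E w) (\<Pi>\<^sub>M i\<in>UNIV. pc E w i) (\<lambda>x. \<lambda>i\<in>UNIV. x i) = real_measure E w"
    by (simp add: rm_eq restrict_UNIV)
  ultimately show ?thesis
    by (subst indep_vars_iff_distr_eq_PiM) (auto intro: rv)
qed

lemma integral_indep:
  fixes g h :: "_ \<Rightarrow> real"
  assumes fin: "finite A" "finite B" and dis: "A \<inter> B = {}"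
    and bg: "\<And>x. \<bar>g x\<bar> \<le> Bg" and bh: "\<And>x. \<bar>h x\<bar> \<le> Bh"
  shows "(\<integral>\<omega>. g (restrict \<omega> A) * h (restrict \<omega> B) \<partial>real_measure E w) =
         (\<integral>\<omega>. g (restrict \<omega> A) \<partial>real_measure E w) * (\<integral>\<omega>. h (restrict \<omega> B) \<partial>real_measure E w)"
proof -
  interpret prob_space "real_measure E w" by (rule prob_rm)
  have iv: "indep_var (PiM A (pc E w)) (\<lambda>\<omega>. restrict (\<lambda>i. \<omega> i) A) (PiM B (pc E w)) (\<lambda>\<omega>. restrict (\<lambda>i. \<omega> i) B)"
    by (rule indep_var_restrict[OF indep_coords dis]) (rule subset_UNIV)+
  have "indep_var borel (g \<circ> (\<lambda>\<omega>. restrict (\<lambda>i. \<omega> i) A)) borel (h \<circ> (\<lambda>\<omega>. restrict (\<lambda>i. \<omega> i) B))"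
    by (rule indep_var_compose[OF iv meas_fin_g[OF fin(1)] meas_fin_g[OF fin(2)]])
  then have "indep_var borel (\<lambda>\<omega>. g (restrict \<omega> A)) borel (\<lambda>\<omega>. h (restrict \<omega> B))"
    by (simp add: comp_def)
  then show ?thesis
    by (rule indep_var_lebesgue_integral) (rule integrable_fin[OF fin(1) bg], rule integrable_fin[OF fin(2) bh])
qed

definition swp :: "('v \<times> 'v \<Rightarrow> nat) \<Rightarrow> ('v \<times> 'v) \<times> nat \<Rightarrow> ('v \<times> 'v) \<times> nat" where
  "swp c ej = (fst ej, if snd ej = Suc (c (fst ej)) then 1 else if snd ej = 1 then Suc (c (fst ej)) else snd ej)"

lemma swp_swp: "swp c (swp c x) = x"
  by (cases x) (auto simp: swp_def)

lemma fst_swp: "fst (swp c x) = fst x"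
  by (simp add: swp_def)

lemma swp_one: "swp c (e, Suc 0) = (e, Suc (c e))"
  by (auto simp: swp_def)

lemma distr_swp:
  "distr (real_measure E w) (real_measure E w) (\<lambda>\<omega> n. \<omega> (swp c n)) = real_measure E w"
proof -
  have inj: "inj_on (swp c) UNIV" by (metis injI swp_swp)
  have pcs: "(\<lambda>i. pc E w (swp c i)) = pc E w" by (rule ext) (simp only: pc_def fst_swp)
  have r: "distr (PiM UNIV (pc E w)) (PiM UNIV (\<lambda>i. pc E w (swp c i))) (\<lambda>\<omega>. \<lambda>n\<in>UNIV. \<omega> (swp c n))
     = PiM UNIV (\<lambda>i. pc E w (swp c i))"
    by (rule distr_PiM_reindex) (rule prob_pc, rule inj, simp)
  then show ?thesis unfolding pcs restrict_UNIV rm_eq .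
qed

lemma swap_integral:
  fixes F :: "('v::finite \<times> 'v \<Rightarrow> bool) \<Rightarrow> real"
  shows "(\<integral>\<omega>. F (\<lambda>e. \<omega> (e, Suc (c e))) \<partial>real_measure E w) = (\<integral>\<omega>. F (\<lambda>e. \<omega> (e, Suc 0)) \<partial>real_measure E w)"
proof -
  let ?P = "real_measure E w"
  have T: "(\<lambda>\<omega> n. \<omega> (swp c n)) \<in> measurable ?P ?P"
  proof -
    have "(\<lambda>\<omega>. \<lambda>n\<in>UNIV. \<omega> (swp c n)) \<in> measurable ?P (PiM UNIV (pc E w))"
    proof (rule measurable_restrict)
      fix i :: "('v \<times> 'v) \<times> nat"
      have "(\<lambda>\<omega>. \<omega> (swp c i)) \<in> measurable ?P (pc E w (swp c i))"
        unfolding rm_eq by (rule measurable_component_singleton) simp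
      moreover have "pc E w (swp c i) = pc E w i" by (simp only: pc_def fst_swp)
      ultimately show "(\<lambda>\<omega>. \<omega> (swp c i)) \<in> measurable ?P (pc E w i)" by simp
    qed
    then show ?thesis unfolding rm_eq restrict_UNIV .
  qed
  let ?J = "(\<lambda>e. (e, Suc 0)) ` (UNIV :: ('v \<times> 'v) set)"
  have rJ: "restrict \<omega> ?J (e, Suc 0) = \<omega> (e, Suc 0)" for \<omega> e
    by simp
  have "(\<lambda>\<omega>. (\<lambda>f. F (\<lambda>e. f (e, Suc 0))) (restrict \<omega> ?J)) \<in> borel_measurable ?P"
    by (rule meas_fin) simp
  then have mF: "(\<lambda>\<omega>. F (\<lambda>e. \<omega> (e, Suc 0))) \<in> borel_measurable ?P"
    by (simp only: rJ)
  have "(\<integral>\<omega>. F (\<lambda>e. \<omega> (e, Suc 0)) \<partial>?P) = (\<integral>\<omega>. F (\<lambda>e. \<omega> (e, Suc 0)) \<partial>distr ?P ?P (\<lambda>\<omega> n. \<omega> (swp c n)))"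
    by (simp add: distr_swp)
  also have "\<dots> = (\<integral>\<omega>. F (\<lambda>e. \<omega> (swp c (e, Suc 0))) \<partial>?P)"
    by (rule integral_distr[OF T mF])
  finally show ?thesis by (simp add: swp_one)
qed



lemma meas_c:
  fixes F :: "('v::finite \<times> 'v \<Rightarrow> bool) \<Rightarrow> real"
  shows "(\<lambda>\<omega>. F (\<lambda>e. \<omega> (e, Suc (c e)))) \<in> borel_measurable (real_measure E w)"
proof -
  let ?J = "(\<lambda>e. (e, Suc (c e))) ` (UNIV :: ('v \<times> 'v) set)"
  have rJ: "restrict \<omega> ?J (e, Suc (c e)) = \<omega> (e, Suc (c e))" for \<omega> e
    by simp
  have "(\<lambda>\<omega>. (\<lambda>f. F (\<lambda>e. f (e, Suc (c e)))) (restrict \<omega> ?J)) \<in> borel_measurable (real_measure E w)"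
    by (rule meas_fin) simp
  then show ?thesis by (simp only: rJ)
qed

lemma integrable_bnd:
  fixes f :: "_ \<Rightarrow> real"
  assumes "f \<in> borel_measurable (real_measure E w)" "\<And>x. \<bar>f x\<bar> \<le> B"
  shows "integrable (real_measure E w) f"
proof -
  interpret prob_space "real_measure E w" by (rule prob_rm)
  show ?thesis by (rule integrable_const_bound[where B=B]) (use assms in auto)
qed

lemma sum_r_bnd:
  fixes r :: "'v::finite \<Rightarrow> real"
  assumes "\<forall>x. 0 \<le> r x"
  shows "\<bar>sum r A\<bar> \<le> sum r UNIV"
proof -
  have "0 \<le> sum r A" using assms by (simp add: sum_nonneg)
  moreover have "sum r A \<le> sum r UNIV" using assms by (intro sum_mono2) auto
  ultimately show ?thesis by simp
qed

lemma gain_formula: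
  fixes r :: "'v::finite \<Rightarrow> real"
  assumes rpos: "\<forall>x. 0 \<le> r x"
    and pos: "hist_prob E w y (partial_matrix E y M0) > 0"
    and st: "run_rounds E y M0 = (Ec, c)"
  shows "marginal_gain E w r v y (partial_matrix E y M0) =
     (\<integral>\<omega>. sum r ({x. (v, x) \<in> {e\<in>Ec. \<omega> (e, Suc 0)}\<^sup>*} - (set y \<union> hits (partial_matrix E y M0)))
        \<partial>real_measure E w)"
proof -
  let ?P = "real_measure E w"
  let ?My = "partial_matrix E y M0"
  let ?S = "set y \<union> hits ?My"
  let ?H = "hist_event E w y ?My"
  define D where "D = Sigma (UNIV :: ('v \<times> 'v) set) (\<lambda>e. {1..c e})"
  define J where "J = (\<lambda>e. (e, Suc (c e))) ` (UNIV :: ('v \<times> 'v) set)"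
  have finD: "finite D" unfolding D_def by (intro finite_SigmaI) auto
  have finJ: "finite J" unfolding J_def by simp
  have dis: "J \<inter> D = {}" unfolding J_def D_def by auto
  have Hchar: "\<omega> \<in> ?H \<longleftrightarrow> restrict \<omega> D = restrict M0 D" for \<omega>
  proof -
    have "\<omega> \<in> ?H \<longleftrightarrow> partial_matrix E y \<omega> = ?My" by (simp add: hist_event_def)
    also have "\<dots> \<longleftrightarrow> (\<forall>e j. 1 \<le> j \<and> j \<le> c e \<longrightarrow> \<omega> (e, j) = M0 (e, j))"
      by (simp add: partial_eq_iff st)
    also have "\<dots> \<longleftrightarrow> restrict \<omega> D = restrict M0 D"
      unfolding D_def restrict_def fun_eq_iff by auto
    finally show ?thesis .
  qed
  define h where "h f = (if f = restrict M0 D then 1 else 0 :: real)" for f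
  have indH: "indicator ?H \<omega> = h (restrict \<omega> D)" for \<omega>
    by (simp add: Hchar indicator_def h_def)
  define g where "g f = sum r ({x. (v, x) \<in> {e\<in>Ec. f (e, Suc (c e))}\<^sup>*} - ?S)" for f
  define G where "G \<omega> = sum r (round_activated Ec c \<omega> v - ?S)" for \<omega>
  have Gg: "G \<omega> = g (restrict \<omega> J)" for \<omega>
  proof -
    have "restrict \<omega> J (e, Suc (c e)) = \<omega> (e, Suc (c e))" for e unfolding J_def by simp
    then show ?thesis by (simp add: G_def g_def round_activated_def live_arcs_def)
  qed
  define a where "a = f_hist r y ?My"
  have key: "f_obj E r (y @ [v]) \<omega> * indicator ?H \<omega> = a * indicator ?H \<omega> + G \<omega> * indicator ?H \<omega>" for \<omega>
  proof (cases "\<omega> \<in> ?H")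
    case True
    then have pe: "partial_matrix E y \<omega> = ?My" by (simp add: hist_event_def)
    then have "run_rounds E y \<omega> = run_rounds E y M0"
      using partial_eq_iff[of E y \<omega> M0] pe by (intro det) blast
    with st have st\<omega>: "run_rounds E y \<omega> = (Ec, c)" by simp
    show ?thesis using f_obj_snoc[OF st\<omega>, of r v] True
      by (simp add: pe a_def G_def distrib_right)
  qed simp
  have bg: "\<bar>g f\<bar> \<le> sum r UNIV" for f unfolding g_def by (rule sum_r_bnd[OF rpos])
  have bh: "\<bar>h f\<bar> \<le> 1" for f by (simp add: h_def)
  have mH: "(\<lambda>\<omega>. h (restrict \<omega> D)) \<in> borel_measurable ?P" by (rule meas_fin[OF finD])
  have mG: "(\<lambda>\<omega>. g (restrict \<omega> J)) \<in> borel_measurable ?P" by (rule meas_fin[OF finJ])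
  have i1: "integrable ?P (\<lambda>\<omega>. a * h (restrict \<omega> D))"
    by (rule integrable_bnd[where B="\<bar>a\<bar>"]) (use mH bh in \<open>auto simp: abs_mult intro: mult_left_le\<close>)
  have i2: "integrable ?P (\<lambda>\<omega>. g (restrict \<omega> J) * h (restrict \<omega> D))"
  proof (rule integrable_bnd[where B="sum r UNIV"])
    show "(\<lambda>\<omega>. g (restrict \<omega> J) * h (restrict \<omega> D)) \<in> borel_measurable ?P"
      using mG mH by (rule borel_measurable_times)
    show "\<bar>g (restrict \<omega> J) * h (restrict \<omega> D)\<bar> \<le> sum r UNIV" for \<omega>
      using bg[of "restrict \<omega> J"] bh[of "restrict \<omega> D"] rpos by (simp add: h_def sum_nonneg)
  qed
  have PH: "measure ?P ?H = hist_prob E w y ?My" by (simp add: hist_prob_def)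
  have IH: "(\<integral>\<omega>. h (restrict \<omega> D) \<partial>?P) = hist_prob E w y ?My"
  proof -
    have "(\<integral>\<omega>. h (restrict \<omega> D) \<partial>?P) = (\<integral>\<omega>. indicator ?H \<omega> \<partial>?P)" by (simp add: indH)
    also have "\<dots> = measure ?P ?H" by simp
    finally show ?thesis by (simp add: PH)
  qed
  have "(\<integral>\<omega>. f_obj E r (y @ [v]) \<omega> * indicator ?H \<omega> \<partial>?P) =
        (\<integral>\<omega>. a * h (restrict \<omega> D) + g (restrict \<omega> J) * h (restrict \<omega> D) \<partial>?P)"
  proof (rule Bochner_Integration.integral_cong[OF refl])
    fix \<omega>
    show "f_obj E r (y @ [v]) \<omega> * indicator ?H \<omega> = a * h (restrict \<omega> D) + g (restrict \<omega> J) * h (restrict \<omega> D)"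
      using key[of \<omega>] unfolding indH Gg .
  qed
  also have "\<dots> = (\<integral>\<omega>. a * h (restrict \<omega> D) \<partial>?P) + (\<integral>\<omega>. g (restrict \<omega> J) * h (restrict \<omega> D) \<partial>?P)"
    by (rule Bochner_Integration.integral_add[OF i1 i2])
  also have "(\<integral>\<omega>. g (restrict \<omega> J) * h (restrict \<omega> D) \<partial>?P) =
      (\<integral>\<omega>. g (restrict \<omega> J) \<partial>?P) * (\<integral>\<omega>. h (restrict \<omega> D) \<partial>?P)"
    by (rule integral_indep[OF finJ finD dis bg bh])
  finally have I: "(\<integral>\<omega>. f_obj E r (y @ [v]) \<omega> * indicator ?H \<omega> \<partial>?P) =
      a * hist_prob E w y ?My + (\<integral>\<omega>. g (restrict \<omega> J) \<partial>?P) * hist_prob E w y ?My"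
    by (simp only: integral_mult_right_zero IH)
  have mg: "marginal_gain E w r v y ?My = (\<integral>\<omega>. g (restrict \<omega> J) \<partial>?P)"
    unfolding marginal_gain_def cond_expect_def I PH a_def[symmetric] using pos
    by (simp add: field_simps)
  have "(\<integral>\<omega>. g (restrict \<omega> J) \<partial>?P) =
     (\<integral>\<omega>. (\<lambda>L. sum r ({x. (v, x) \<in> {e\<in>Ec. L e}\<^sup>*} - ?S)) (\<lambda>e. \<omega> (e, Suc (c e))) \<partial>?P)"
  proof -
    have rJ: "restrict \<omega> J (e, Suc (c e)) = \<omega> (e, Suc (c e))" for \<omega> e unfolding J_def by simp
    show ?thesis by (simp only: g_def rJ)
  qed
  also have "\<dots> = (\<integral>\<omega>. (\<lambda>L. sum r ({x. (v, x) \<in> {e\<in>Ec. L e}\<^sup>*} - ?S)) (\<lambda>e. \<omega> (e, Suc 0)) \<partial>?P)"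
    by (rule swap_integral)
  finally show ?thesis using mg by simp
qed

theorem lemma2:
  fixes E :: "('v::finite \<times> 'v) set"
    and w :: "'v \<times> 'v \<Rightarrow> real"
    and r :: "'v \<Rightarrow> real"
    and v :: 'v
    and y z :: "'v list"
    and My Mz :: "'v partial_realization"
  assumes "\<forall>e\<in>E. 0 \<le> w e \<and> w e \<le> 1"
    and "\<forall>x. 0 \<le> r x"
    and "hist_prob E w y My > 0"
    and "hist_prob E w z Mz > 0"
    and "sub_history E (y, My) (z, Mz)"
  shows "marginal_gain E w r v y My \<ge> marginal_gain E w r v z Mz"
proof -
  note rpos = assms(2)
  from assms(5) obtain M0 where pre: "prefix y z"
    and My: "partial_matrix E y M0 = My" and Mz: "partial_matrix E z M0 = Mz"
    by (auto simp: sub_history_def)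
  from pre obtain t where zt: "z = y @ t" by (auto simp: prefix_def)
  obtain Ey cy where sty: "run_rounds E y M0 = (Ey, cy)" by fastforce
  obtain Ez cz where stz: "run_rounds E z M0 = (Ez, cz)" by fastforce
  have fm: "fst (run_rounds E z M0) \<subseteq> fst (run_rounds E y M0) \<and>
      (\<forall>e. snd (run_rounds E y M0) e \<le> snd (run_rounds E z M0) e)"
    unfolding zt run_append by (rule fold_mono)
  then have Esub: "Ez \<subseteq> Ey" and cle: "\<And>e. cy e \<le> cz e" using sty stz by auto
  let ?Sy = "set y \<union> hits My" and ?Sz = "set z \<union> hits Mz"
  have hsub: "hits My \<subseteq> hits Mz"
  proof
    fix x assume "x \<in> hits My"
    then obtain u j where uj: "1 \<le> j" "j \<le> cy (u, x)" "M0 ((u, x), j)"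
      using hits_partial[OF sty] My by auto
    then have "j \<le> cz (u, x)" using cle[of "(u, x)"] by simp
    with uj show "x \<in> hits Mz" using hits_partial[OF stz] Mz by auto
  qed
  have Ssub: "?Sy \<subseteq> ?Sz" using hsub zt by auto
  have gy: "marginal_gain E w r v y My =
     (\<integral>\<omega>. sum r ({x. (v, x) \<in> {e\<in>Ey. \<omega> (e, Suc 0)}\<^sup>*} - ?Sy) \<partial>real_measure E w)"
    using gain_formula[OF rpos _ sty, of w v] assms(3) My by simp
  have gz: "marginal_gain E w r v z Mz =
     (\<integral>\<omega>. sum r ({x. (v, x) \<in> {e\<in>Ez. \<omega> (e, Suc 0)}\<^sup>*} - ?Sz) \<partial>real_measure E w)"
    using gain_formula[OF rpos _ stz, of w v] assms(4) Mz by simp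
  have int: "integrable (real_measure E w) (\<lambda>\<omega>. sum r ({x. (v, x) \<in> {e\<in>Ec. \<omega> (e, Suc 0)}\<^sup>*} - S))"
    for Ec S
  proof (rule integrable_bnd[where B="sum r UNIV"])
    show "(\<lambda>\<omega>. sum r ({x. (v, x) \<in> {e\<in>Ec. \<omega> (e, Suc 0)}\<^sup>*} - S)) \<in> borel_measurable (real_measure E w)"
      using meas_c[of "\<lambda>L. sum r ({x. (v, x) \<in> {e\<in>Ec. L e}\<^sup>*} - S)" "\<lambda>_. 0" E w] by simp
  qed (rule sum_r_bnd[OF rpos])
  have pw: "sum r ({x. (v, x) \<in> {e\<in>Ez. \<omega> (e, Suc 0)}\<^sup>*} - ?Sz)
         \<le> sum r ({x. (v, x) \<in> {e\<in>Ey. \<omega> (e, Suc 0)}\<^sup>*} - ?Sy)" for \<omega>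
  proof (rule sum_mono2)
    have "{e\<in>Ez. \<omega> (e, Suc 0)} \<subseteq> {e\<in>Ey. \<omega> (e, Suc 0)}" using Esub by auto
    then have "{e\<in>Ez. \<omega> (e, Suc 0)}\<^sup>* \<subseteq> {e\<in>Ey. \<omega> (e, Suc 0)}\<^sup>*" by (rule rtrancl_mono)
    then show "{x. (v, x) \<in> {e\<in>Ez. \<omega> (e, Suc 0)}\<^sup>*} - ?Sz \<subseteq> {x. (v, x) \<in> {e\<in>Ey. \<omega> (e, Suc 0)}\<^sup>*} - ?Sy"
      using Ssub by blast
  qed (use rpos in auto)
  show ?thesis unfolding gy gz
    by (rule integral_mono[OF int int pw])
qed

end
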